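(* Let $(E,f)$ be a polymatroid that admits a tensor product $(E\times\{1,2,3\},g)$ with $U_{2,3}$. For $A_1,A_2,A_3\subseteq E$ put $s=f(A_1\cup A_2\cup A_3)$, $r_i=f(A_i)$ for $i=1,2,3$, and for $\{i,j,k\}=\{1,2,3\}$ put $s_i=f(A_j\cup A_k)$. Define \[ \alpha(A_1,A_2,A_3)=\min\{r_1+r_2+r_3,\ s_1+s_2+s_3-s\},\qquad \beta(A_1,A_2,A_3)=\max\{s_1+r_1,\ s_2+r_2,\ s_3+r_3\}. \] Then for every $A_1,A_2,A_3\subseteq E$, \[ \beta(A_1,A_2,A_3)\le g\big((A_1\times\{1\})\cup(A_2\times\{2\})\cup(A_3\times\{3\})\big)\le \alpha(A_1,A_2,A_3). \]
   Context: A polymatroid $(E,f)$ consists of a finite ground set $E$ and a function $f\colon 2^E\to\mathbb{R}$ with $f(\emptyset)=0$ that is monotone ($S\subseteq T\Rightarrow f(S)\le f(T)$) and submodular ($f(S)+f(T)\ge f(S\cup T)+f(S\cap T)$). The uniform matroid $U_{2,3}$ is the polymatroid on $\{1,2,3\}$ with rank function $r(T)=\min\{|T|,2\}$. A tensor product of polymatroids $(E_1,f_1)$ and $(E_2,f_2)$ is a polymatroid $(E_1\times E_2,g)$ such that $g(S\times T)=f_1(S)f_2(T)$ for all $S\subseteq E_1$, $T\subseteq E_2$. *)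

theory Defs
  imports Complex_Main
begin

definition polymatroid :: "'a set \<Rightarrow> ('a set \<Rightarrow> real) \<Rightarrow> bool" where
  "polymatroid E f \<longleftrightarrow> finite E \<and> f {} = 0 \<and>
     (\<forall>S T. S \<subseteq> T \<and> T \<subseteq> E \<longrightarrow> f S \<le> f T) \<and>
     (\<forall>S T. S \<subseteq> E \<and> T \<subseteq> E \<longrightarrow> f S + f T \<ge> f (S \<union> T) + f (S \<inter> T))"

definition U23_rank :: "nat set \<Rightarrow> real" where
  "U23_rank T = real (min (card T) 2)"

definition tensor_product ::
  "'a set \<Rightarrow> ('a set \<Rightarrow> real) \<Rightarrow> 'b set \<Rightarrow> ('b set \<Rightarrow> real) \<Rightarrow> (('a \<times> 'b) set \<Rightarrow> real) \<Rightarrow> bool" where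
  "tensor_product E1 f1 E2 f2 g \<longleftrightarrow> polymatroid (E1 \<times> E2) g \<and>
     (\<forall>S T. S \<subseteq> E1 \<and> T \<subseteq> E2 \<longrightarrow> g (S \<times> T) = f1 S * f2 T)"

end

theory Submission
  imports Defs
begin

locale tpx =
  fixes E :: "'a set" and f :: "'a set \<Rightarrow> real" and g :: "('a \<times> nat) set \<Rightarrow> real"
  assumes pm: "polymatroid E f"
    and tp: "tensor_product E f {1,2,3} U23_rank g"
begin

abbreviation "I \<equiv> ({1,2,3}::nat set)"

lemma gmono: "S \<subseteq> T \<Longrightarrow> T \<subseteq> E \<times> I \<Longrightarrow> g S \<le> g T"
  using tp unfolding tensor_product_def polymatroid_def by blast

lemma gsub: "S \<subseteq> E \<times> I \<Longrightarrow> T \<subseteq> E \<times> I \<Longrightarrow> g (S \<union> T) + g (S \<inter> T) \<le> g S + g T"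
  using tp unfolding tensor_product_def polymatroid_def by fastforce

lemma gempty: "g {} = 0"
  using tp unfolding tensor_product_def polymatroid_def by blast

lemma fmono: "S \<subseteq> T \<Longrightarrow> T \<subseteq> E \<Longrightarrow> f S \<le> f T"
  using pm unfolding polymatroid_def by blast

lemma gadd: "S \<subseteq> E \<times> I \<Longrightarrow> T \<subseteq> E \<times> I \<Longrightarrow> g (S \<union> T) \<le> g S + g T"
proof -
  assume a: "S \<subseteq> E \<times> I" "T \<subseteq> E \<times> I"
  have "g {} \<le> g (S \<inter> T)" using a by (intro gmono) auto
  then show ?thesis using gsub[OF a] gempty by linarith
qed

lemma g1: "S \<subseteq> E \<Longrightarrow> i \<in> I \<Longrightarrow> g (S \<times> {i}) = f S"
  using tp unfolding tensor_product_def U23_rank_def by (auto simp: min_def)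

lemma g2: "S \<subseteq> E \<Longrightarrow> i \<in> I \<Longrightarrow> j \<in> I \<Longrightarrow> i \<noteq> j \<Longrightarrow> g (S \<times> {i,j}) = 2 * f S"
  using tp unfolding tensor_product_def U23_rank_def by (auto simp: min_def)

lemma g3: "S \<subseteq> E \<Longrightarrow> i \<in> I \<Longrightarrow> j \<in> I \<Longrightarrow> k \<in> I \<Longrightarrow> i \<noteq> j \<Longrightarrow> g (S \<times> {i,j,k}) = 2 * f S"
proof -
  assume a: "S \<subseteq> E" "i \<in> I" "j \<in> I" "k \<in> I" "i \<noteq> j"
  have c: "card {i,j,k} \<ge> 2"
  proof (cases "k \<in> {i,j}")
    case True then have "{i,j,k} = {i,j}" by auto
    then show ?thesis using a by simp
  next
    case False then show ?thesis using a by simp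
  qed
  have "{i,j,k} \<subseteq> I" using a by auto
  then show ?thesis using tp a c unfolding tensor_product_def U23_rank_def
    by (auto simp: min_def)
qed

lemma closure:
  assumes "W \<subseteq> E \<times> I" "S \<subseteq> E" "S \<times> {i,j} \<subseteq> W" "i \<in> I" "j \<in> I" "k \<in> I" "i \<noteq> j"
  shows "g (W \<union> S \<times> {k}) = g W"
proof -
  let ?Y = "S \<times> {i,j,k}"
  have Y: "?Y \<subseteq> E \<times> I" using assms by auto
  have "g (W \<union> ?Y) + g (W \<inter> ?Y) \<le> g W + g ?Y" using gsub[OF assms(1) Y] .
  moreover have "g (S \<times> {i,j}) \<le> g (W \<inter> ?Y)" using assms by (intro gmono) auto
  moreover have "g ?Y = 2 * f S" using g3 assms by blast
  moreover have "g (S \<times> {i,j}) = 2 * f S" using g2 assms by blast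
  moreover have "W \<union> ?Y = W \<union> S \<times> {k}" using assms by auto
  ultimately have "g (W \<union> S \<times> {k}) \<le> g W" by (metis add_le_cancel_right order_trans add_left_mono add.commute)
  moreover have "g W \<le> g (W \<union> S \<times> {k})" using assms by (intro gmono) auto
  ultimately show ?thesis by linarith
qed

lemma twolevel:
  assumes "T \<subseteq> S" "S \<subseteq> E" "i \<in> I" "j \<in> I" "i \<noteq> j"
  shows "f S + f T \<le> g (S \<times> {i} \<union> T \<times> {j})"
proof -
  let ?Z = "S \<times> {i} \<union> T \<times> {j}"
  have "g (?Z \<union> S \<times> {j}) + g (?Z \<inter> S \<times> {j}) \<le> g ?Z + g (S \<times> {j})"
    using assms by (intro gsub) auto
  moreover have "?Z \<union> S \<times> {j} = S \<times> {i,j}" using assms by auto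
  moreover have "?Z \<inter> S \<times> {j} = T \<times> {j}" using assms by auto
  ultimately have "g (S \<times> {i,j}) + g (T \<times> {j}) \<le> g ?Z + g (S \<times> {j})" by simp
  moreover have "g (S \<times> {j}) = f S" using g1 assms by blast
  moreover have "g (T \<times> {j}) = f T" using g1 assms by blast
  moreover have "g (S \<times> {i,j}) = 2 * f S" using g2 assms by blast
  ultimately show ?thesis by linarith
qed


lemma lower:
  assumes E: "Ai \<subseteq> E" "Aj \<subseteq> E" "Ak \<subseteq> E"
    and I: "i \<in> I" "j \<in> I" "k \<in> I" and d: "i \<noteq> j" "i \<noteq> k" "j \<noteq> k"
  shows "f (Aj \<union> Ak) + f Ai \<le> g (Ai \<times> {i} \<union> Aj \<times> {j} \<union> Ak \<times> {k})"
proof -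
  define U where "U = Ai \<union> Aj \<union> Ak"
  define S where "S = Aj \<union> Ak"
  define X where "X = Ai \<times> {i} \<union> Aj \<times> {j} \<union> Ak \<times> {k}"
  define Z where "Z = X \<union> U \<times> {i}"
  have UE: "U \<subseteq> E" "S \<subseteq> E" using E U_def S_def by auto
  have XE: "X \<subseteq> E \<times> I" using E I X_def by auto
  have ZE: "Z \<subseteq> E \<times> I" using XE UE I Z_def by auto
  have s1: "g (X \<union> U \<times> {i}) + g (X \<inter> U \<times> {i}) \<le> g X + g (U \<times> {i})"
    using XE UE I by (intro gsub) auto
  have "X \<inter> U \<times> {i} = Ai \<times> {i}" using d unfolding X_def U_def by auto
  with s1 have s1': "g Z + f Ai \<le> g X + f U" using g1 E UE I Z_def by simp
  define Z1 where "Z1 = Z \<union> Aj \<times> {k}"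
  have c1: "g Z1 = g Z" unfolding Z1_def
    using closure[OF ZE E(2), of i j k] I d unfolding Z_def X_def U_def by auto
  have Z1E: "Z1 \<subseteq> E \<times> I" using ZE E I Z1_def by auto
  define Z2 where "Z2 = Z1 \<union> Ak \<times> {j}"
  have c2: "g Z2 = g Z1" unfolding Z2_def
    using closure[OF Z1E E(3), of i k j] I d unfolding Z1_def Z_def X_def U_def by auto
  define W where "W = U \<times> {i} \<union> S \<times> {j}"
  have WE: "W \<subseteq> E \<times> I" using UE I W_def by auto
  have "Z2 = W \<union> S \<times> {k}" unfolding Z2_def Z1_def Z_def X_def W_def U_def S_def by auto
  moreover have "g (W \<union> S \<times> {k}) = g W"
    using closure[OF WE UE(2), of i j k] I d unfolding W_def U_def S_def by auto
  moreover have "f U + f S \<le> g W" unfolding W_def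
    using twolevel[of S U i j] UE I d unfolding U_def S_def by auto
  ultimately have "f U + f S \<le> g Z2" by simp
  then show ?thesis using s1' c1 c2 unfolding X_def S_def by linarith
qed

lemma upper:
  assumes E: "Ai \<subseteq> E" "Aj \<subseteq> E" "Ak \<subseteq> E"
    and I: "i \<in> I" "j \<in> I" "k \<in> I" and d: "i \<noteq> j" "i \<noteq> k" "j \<noteq> k"
  shows "g (Ai \<times> {i} \<union> Aj \<times> {j} \<union> Ak \<times> {k}) \<le> f (Aj \<union> Ak) + f (Ai \<union> Ak)"
proof -
  define U where "U = Ai \<union> Aj \<union> Ak"
  define S1 where "S1 = Aj \<union> Ak"
  define S2 where "S2 = Ai \<union> Ak"
  define X where "X = Ai \<times> {i} \<union> Aj \<times> {j} \<union> Ak \<times> {k}"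
  have UE: "U \<subseteq> E" "S1 \<subseteq> E" "S2 \<subseteq> E" using E U_def S1_def S2_def by auto
  define Q1 where "Q1 = Ai \<times> {i} \<union> S1 \<times> {j,k}"
  define Q2 where "Q2 = Aj \<times> {j} \<union> S2 \<times> {i,k}"
  have Q1E: "Q1 \<subseteq> E \<times> I" using E UE I Q1_def by auto
  have Q2E: "Q2 \<subseteq> E \<times> I" using E UE I Q2_def by auto
  have q1a: "g (Q1 \<union> S1 \<times> {i}) = g Q1"
    using closure[OF Q1E UE(2), of j k i] I d unfolding Q1_def by auto
  define W1 where "W1 = U \<times> {i} \<union> S1 \<times> {j}"
  have W1E: "W1 \<subseteq> E \<times> I" using UE I W1_def by auto
  have "Q1 \<union> S1 \<times> {i} = W1 \<union> S1 \<times> {k}" unfolding Q1_def W1_def U_def S1_def by auto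
  moreover have "g (W1 \<union> S1 \<times> {k}) = g W1"
    using closure[OF W1E UE(2), of i j k] I d unfolding W1_def U_def S1_def by auto
  moreover have "g W1 \<le> g (U \<times> {i}) + g (S1 \<times> {j})" unfolding W1_def
    using UE I by (intro gadd) auto
  ultimately have q1: "g Q1 \<le> f U + f S1" using q1a g1 UE I by simp
  have q2a: "g (Q2 \<union> S2 \<times> {j}) = g Q2"
    using closure[OF Q2E UE(3), of i k j] I d unfolding Q2_def by auto
  define W2 where "W2 = U \<times> {j} \<union> S2 \<times> {i}"
  have W2E: "W2 \<subseteq> E \<times> I" using UE I W2_def by auto
  have "Q2 \<union> S2 \<times> {j} = W2 \<union> S2 \<times> {k}" unfolding Q2_def W2_def U_def S2_def by auto
  moreover have "g (W2 \<union> S2 \<times> {k}) = g W2"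
    using closure[OF W2E UE(3), of j i k] I d unfolding W2_def U_def S2_def by auto
  moreover have "g W2 \<le> g (U \<times> {j}) + g (S2 \<times> {i})" unfolding W2_def
    using UE I by (intro gadd) auto
  ultimately have q2: "g Q2 \<le> f U + f S2" using q2a g1 UE I by simp
  have s: "g (Q1 \<union> Q2) + g (Q1 \<inter> Q2) \<le> g Q1 + g Q2" using gsub[OF Q1E Q2E] .
  have QUE: "Q1 \<union> Q2 \<subseteq> E \<times> I" using Q1E Q2E by auto
  have "g ((Q1 \<union> Q2) \<union> S2 \<times> {j}) = g (Q1 \<union> Q2)"
    using closure[OF QUE UE(3), of i k j] I d unfolding Q1_def Q2_def by auto
  moreover have QU2: "(Q1 \<union> Q2) \<union> S2 \<times> {j} \<subseteq> E \<times> I" using QUE UE I by auto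
  moreover have "g (((Q1 \<union> Q2) \<union> S2 \<times> {j}) \<union> U \<times> {i}) = g ((Q1 \<union> Q2) \<union> S2 \<times> {j})"
    using closure[OF QU2 UE(1), of j k i] I d unfolding Q1_def Q2_def U_def S1_def S2_def by auto
  moreover have "((Q1 \<union> Q2) \<union> S2 \<times> {j}) \<union> U \<times> {i} = U \<times> {i,j,k}"
    unfolding Q1_def Q2_def U_def S1_def S2_def using d by auto
  moreover have "g (U \<times> {i,j,k}) = 2 * f U" using g3 UE I d by blast
  ultimately have qu: "g (Q1 \<union> Q2) = 2 * f U" by simp
  have "X \<subseteq> Q1 \<inter> Q2" unfolding X_def Q1_def Q2_def S1_def S2_def by auto
  then have "g X \<le> g (Q1 \<inter> Q2)" using Q1E by (intro gmono) auto
  then show ?thesis using s qu q1 q2 unfolding X_def S1_def S2_def by linarith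
qed


lemma upper2:
  assumes E: "Ai \<subseteq> E" "Aj \<subseteq> E" "Ak \<subseteq> E"
    and I: "i \<in> I" "j \<in> I" "k \<in> I" and d: "i \<noteq> j" "i \<noteq> k" "j \<noteq> k"
  shows "g (Ai \<times> {i} \<union> Aj \<times> {j} \<union> Ak \<times> {k}) \<le>
           f (Aj \<union> Ak) + f (Ai \<union> Ak) + f (Ai \<union> Aj) - f (Ai \<union> Aj \<union> Ak)"
proof -
  define U where "U = Ai \<union> Aj \<union> Ak"
  define S1 where "S1 = Aj \<union> Ak"
  define S2 where "S2 = Ai \<union> Ak"
  define S3 where "S3 = Ai \<union> Aj"
  define M where "M = S1 \<inter> S2"
  define X where "X = Ai \<times> {i} \<union> Aj \<times> {j} \<union> Ak \<times> {k}"
  have UE: "U \<subseteq> E" "S1 \<subseteq> E" "S2 \<subseteq> E" "S3 \<subseteq> E" "M \<subseteq> E"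
    using E U_def S1_def S2_def S3_def M_def by auto
  define P where "P = Ai \<times> {i} \<union> Aj \<times> {j} \<union> U \<times> {k}"
  have PE: "P \<subseteq> E \<times> I" using E UE I P_def by auto
  have p1: "g (P \<union> Ai \<times> {j}) = g P"
    using closure[OF PE E(1), of i k j] I d unfolding P_def U_def by auto
  define P1 where "P1 = P \<union> Ai \<times> {j}"
  have P1E: "P1 \<subseteq> E \<times> I" using PE E I P1_def by auto
  have p2: "g (P1 \<union> Aj \<times> {i}) = g P1"
    using closure[OF P1E E(2), of j k i] I d unfolding P1_def P_def U_def by auto
  define W' where "W' = S3 \<times> {i} \<union> U \<times> {k}"
  have W'E: "W' \<subseteq> E \<times> I" using UE I W'_def by auto
  have "P1 \<union> Aj \<times> {i} = W' \<union> S3 \<times> {j}"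
    unfolding P1_def P_def W'_def S3_def U_def by auto
  moreover have "g (W' \<union> S3 \<times> {j}) = g W'"
    using closure[OF W'E UE(4), of i k j] I d unfolding W'_def S3_def U_def by auto
  moreover have "g W' \<le> g (S3 \<times> {i}) + g (U \<times> {k})" unfolding W'_def
    using UE I by (intro gadd) auto
  ultimately have gP: "g P \<le> f S3 + f U" using p1 p2 g1 UE I unfolding P1_def by simp
  define R where "R = M \<times> {k} \<union> S2 \<times> {i} \<union> S1 \<times> {j}"
  have RE: "R \<subseteq> E \<times> I" using UE I R_def by auto
  define W where "W = S2 \<times> {i} \<union> S1 \<times> {j}"
  have WE: "W \<subseteq> E \<times> I" using UE I W_def by auto
  have "R = W \<union> M \<times> {k}" unfolding R_def W_def by auto
  moreover have "g (W \<union> M \<times> {k}) = g W"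
    using closure[OF WE UE(5), of i j k] I d unfolding W_def M_def by auto
  moreover have "g W \<le> g (S2 \<times> {i}) + g (S1 \<times> {j})" unfolding W_def
    using UE I by (intro gadd) auto
  ultimately have gR: "g R \<le> f S2 + f S1" using g1 UE I by simp
  define V0 where "V0 = U \<times> {k} \<union> S2 \<times> {i} \<union> S1 \<times> {j}"
  have V0E: "V0 \<subseteq> E \<times> I" using UE I V0_def by auto
  have "P \<union> R = V0" unfolding P_def R_def V0_def U_def S1_def S2_def M_def by auto
  moreover have v1: "g (V0 \<union> S2 \<times> {j}) = g V0"
    using closure[OF V0E UE(3), of i k j] I d unfolding V0_def U_def S2_def by auto
  moreover have V1E: "V0 \<union> S2 \<times> {j} \<subseteq> E \<times> I" using V0E UE I by auto
  moreover have "g ((V0 \<union> S2 \<times> {j}) \<union> U \<times> {i}) = g (V0 \<union> S2 \<times> {j})"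
    using closure[OF V1E UE(1), of j k i] I d unfolding V0_def U_def S1_def S2_def by auto
  moreover have "(V0 \<union> S2 \<times> {j}) \<union> U \<times> {i} = U \<times> {i,j,k}"
    unfolding V0_def U_def S1_def S2_def by auto
  moreover have "g (U \<times> {i,j,k}) = 2 * f U" using g3 UE I d by blast
  ultimately have gPR: "g (P \<union> R) = 2 * f U" by simp
  have s: "g (P \<union> R) + g (P \<inter> R) \<le> g P + g R" using gsub[OF PE RE] .
  have "X \<subseteq> P \<inter> R" unfolding X_def P_def R_def M_def U_def S1_def S2_def by auto
  then have "g X \<le> g (P \<inter> R)" using PE by (intro gmono) auto
  then show ?thesis using s gPR gP gR unfolding X_def S1_def S2_def S3_def U_def by linarith
qed

end


theorem proposition4p2:
  fixes E :: "'a set" and f :: "'a set \<Rightarrow> real" and g :: "('a \<times> nat) set \<Rightarrow> real"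
    and A1 A2 A3 :: "'a set"
  assumes "polymatroid E f"
    and "tensor_product E f {1,2,3} U23_rank g"
    and "A1 \<subseteq> E" and "A2 \<subseteq> E" and "A3 \<subseteq> E"
  shows "let s = f (A1 \<union> A2 \<union> A3); r1 = f A1; r2 = f A2; r3 = f A3;
             s1 = f (A2 \<union> A3); s2 = f (A1 \<union> A3); s3 = f (A1 \<union> A2);
             \<alpha> = min (r1 + r2 + r3) (s1 + s2 + s3 - s);
             \<beta> = max (s1 + r1) (max (s2 + r2) (s3 + r3));
             G = g ((A1 \<times> {1}) \<union> (A2 \<times> {2}) \<union> (A3 \<times> {3}))
         in \<beta> \<le> G \<and> G \<le> \<alpha>"
proof -
  interpret tpx E f g using assms(1,2) by unfold_locales
  define X where "X = (A1 \<times> {1}) \<union> (A2 \<times> {2}) \<union> (A3 \<times> {3::nat})"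
  have l1: "f (A2 \<union> A3) + f A1 \<le> g X"
    using lower[of A1 A2 A3 1 2 3] assms unfolding X_def by simp
  have l2: "f (A1 \<union> A3) + f A2 \<le> g X"
  proof -
    have "X = A2 \<times> {2} \<union> A1 \<times> {1} \<union> A3 \<times> {3}" unfolding X_def by auto
    then show ?thesis using lower[of A2 A1 A3 2 1 3] assms by simp
  qed
  have l3: "f (A1 \<union> A2) + f A3 \<le> g X"
  proof -
    have "X = A3 \<times> {3} \<union> A1 \<times> {1} \<union> A2 \<times> {2}" unfolding X_def by auto
    then show ?thesis using lower[of A3 A1 A2 3 1 2] assms by simp
  qed
  have u1: "g X \<le> f (A2 \<union> A3) + f (A1 \<union> A3)"
    using upper[of A1 A2 A3 1 2 3] assms unfolding X_def by simp
  have u2: "g X \<le> f (A2 \<union> A3) + f (A1 \<union> A3) + f (A1 \<union> A2) - f (A1 \<union> A2 \<union> A3)"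
    using upper2[of A1 A2 A3 1 2 3] assms unfolding X_def by simp
  have "g X \<le> g (A1 \<times> {1} \<union> A2 \<times> {2}) + g (A3 \<times> {3})"
    unfolding X_def using assms by (intro gadd) auto
  moreover have "g (A1 \<times> {1} \<union> A2 \<times> {2}) \<le> g (A1 \<times> {1}) + g (A2 \<times> {2})"
    using assms by (intro gadd) auto
  ultimately have u3: "g X \<le> f A1 + f A2 + f A3" using g1 assms by simp
  show ?thesis unfolding Let_def X_def[symmetric]
    using l1 l2 l3 u2 u3 by (simp add: max_def min_def)
qed

end
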